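(* Let $\tilde X,\tilde Y$ be $\mathbb{N}$-valued random variables with $\mathbb{E}[\tilde X^2+\tilde Y^2]<+\infty$, let $b_1,b_2>0$, $m_0>0$, and assume $b_1(\mathbb{E}[\tilde X]-1)+b_2\mathbb{E}[\tilde Y]=0$. Write $\hat p_{\tilde X}(z)=\mathbb{E}[z^{\tilde X}]$, $\hat p_{\tilde Y}(z)=\mathbb{E}[z^{\tilde Y}]$. Then the unique $C^1$ function $\hat g_\infty$ on $[0,1]$ with $\hat g_\infty(1)=1$ solving $$m_0b_2(\hat p_{\tilde Y}(z)-1)\,\hat g_\infty(z)+b_1(\hat p_{\tilde X}(z)-z)\,\partial_z\hat g_\infty(z)=0,\qquad z\in[0,1],$$ is $$\hat g_\infty(z)=\exp\Big\{-m_0\frac{b_2}{b_1}\int_z^1\frac{1-\hat p_{\tilde Y}(s)}{\hat p_{\tilde X}(s)-s}\,ds\Big\}.$$ Moreover $\hat g_\infty$ is the probability generating function of an infinitely divisible distribution $g_\infty$ on $\mathbb{N}$. Finally, $g_\infty$ is the density of a random variable $V_\infty$ satisfying $$V_\infty^*\stackrel{d}{=}V_\infty+1+\zeta+\sum_{k=1}^{\gamma}\xi_k,$$ where $V^*_\infty$ is the size-biased version of $V_\infty$, $\zeta$ has generating function $Q^*$, each $\xi_k$ has generating function $P^*$, $\gamma$ has the geometric distribution of parameter $m=\mathbb{E}[\tilde X]$, and $V_\infty,\zeta,\gamma,\xi_1,\xi_2,\dots$ are independent.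
   Context: Let $\phi_X(z)=\sum_{k\ge0}z^kP\{\tilde X>k\}$, $\phi_Y(z)=\sum_{k\ge0}z^kP\{\tilde Y>k\}$, $m=\mathbb{E}[\tilde X]$, $P^*(z)=m^{-1}\phi_X(z)$ and $Q^*(z)=\frac{b_2}{b_1}(1-m)^{-1}\phi_Y(z)$ (these are probability generating functions under the hypotheses). The geometric distribution of parameter $m$ is the law on $\mathbb{N}$ with generating function $(1-m)/(1-ms)$. For a random variable $V$ on $\mathbb{N}$ with density $g$ and finite mean $M_1(g)$, its size-biased version $V^*$ has density $g^*(k)=kg(k)/M_1(g)$. The displayed differential equation is the stationary equation of the linear equation $\partial_t\hat g=b_1(\hat p_{\tilde X}(z)-z)\partial_z\hat g+b_2m_0e^{\bar\alpha_1t}(\hat p_{\tilde Y}(z)-1)\hat g$ with $\bar\alpha_1=b_1(\mathbb{E}[\tilde X]-1)+b_2\mathbb{E}[\tilde Y]=0$. *)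

theory Defs
  imports "HOL-Probability.Probability"
begin

definition pgf :: "nat pmf \<Rightarrow> real \<Rightarrow> real" where
  "pgf p z = measure_pmf.expectation p (\<lambda>k. z ^ k)"

definition tail_gf :: "nat pmf \<Rightarrow> real \<Rightarrow> real" where
  "tail_gf p z = (\<Sum>k. z ^ k * measure_pmf.prob p {k<..})"

definition conv_pmf :: "nat pmf \<Rightarrow> nat pmf \<Rightarrow> nat pmf" where
  "conv_pmf p q = map_pmf (\<lambda>(a, b). a + b) (pair_pmf p q)"

fun conv_pow :: "nat pmf \<Rightarrow> nat \<Rightarrow> nat pmf" where
  "conv_pow p 0 = return_pmf 0"
| "conv_pow p (Suc n) = conv_pmf p (conv_pow p n)"

definition inf_divisible :: "nat pmf \<Rightarrow> bool" where
  "inf_divisible g \<longleftrightarrow> (\<forall>n\<ge>1. \<exists>h. conv_pow h n = g)"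

definition size_biased :: "nat pmf \<Rightarrow> nat \<Rightarrow> real" where
  "size_biased g k = real k * pmf g k / measure_pmf.expectation g real"

definition C1_stationary_solution ::
  "nat pmf \<Rightarrow> nat pmf \<Rightarrow> real \<Rightarrow> real \<Rightarrow> real \<Rightarrow> (real \<Rightarrow> real) \<Rightarrow> bool" where
  "C1_stationary_solution pX pY b1 b2 m0 h \<longleftrightarrow>
     (\<exists>h'. continuous_on {0..1} h' \<and>
        (\<forall>z\<in>{0..1}. (h has_real_derivative h' z) (at z within {0..1})) \<and>
        h 1 = 1 \<and>
        (\<forall>z\<in>{0..1}. m0 * b2 * (pgf pY z - 1) * h z + b1 * (pgf pX z - z) * h' z = 0))"

end

theory Submission
  imports Defs
begin


lemma integrable_pmf_nat_iff:
  fixes p :: "nat pmf" and f :: "nat \<Rightarrow> real"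
  shows "integrable (measure_pmf p) f \<longleftrightarrow> summable (\<lambda>k. \<bar>pmf p k * f k\<bar>)"
  unfolding measure_pmf_eq_density
  by (subst integrable_density) (auto simp: integrable_count_space_nat_iff)

lemma expectation_pmf_nat_sums:
  fixes p :: "nat pmf" and f :: "nat \<Rightarrow> real"
  assumes "integrable (measure_pmf p) f"
  shows "(\<lambda>k. pmf p k * f k) sums measure_pmf.expectation p f"
proof -
  have "measure_pmf.expectation p f = (\<integral>k. pmf p k * f k \<partial>count_space UNIV)"
    unfolding measure_pmf_eq_density by (subst integral_density) auto
  moreover have "integrable (count_space UNIV) (\<lambda>k. pmf p k * f k)"
    using assms by (simp add: integrable_pmf_nat_iff integrable_count_space_nat_iff)
  ultimately show ?thesis using sums_integral_count_space_nat by metis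
qed

lemma pmf_sums_1: "(\<lambda>k. pmf (p::nat pmf) k) sums 1"
  using expectation_pmf_nat_sums[of p "\<lambda>_. 1"] by simp

lemma pgf_sums:
  fixes p :: "nat pmf" assumes "\<bar>z\<bar> \<le> 1"
  shows "(\<lambda>k. pmf p k * z ^ k) sums pgf p z"
proof -
  have "integrable (measure_pmf p) (\<lambda>k. z ^ k)"
    by (rule measure_pmf.integrable_const_bound[where B=1]) (use assms in \<open>auto simp: power_abs intro!: power_le_one\<close>)
  thus ?thesis unfolding pgf_def by (rule expectation_pmf_nat_sums)
qed

lemma pgf_nn:
  fixes p :: "nat pmf" assumes "0 \<le> z" "z \<le> 1"
  shows "ennreal (pgf p z) = (\<integral>\<^sup>+k. ennreal (z ^ k) \<partial>p)"
proof -
  have "integrable (measure_pmf p) (\<lambda>k. z ^ k)"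
    by (rule measure_pmf.integrable_const_bound[where B=1]) (use assms in \<open>auto intro!: power_le_one\<close>)
  thus ?thesis unfolding pgf_def using assms by (subst nn_integral_eq_integral) auto
qed

lemma pgf_nonneg: "0 \<le> z \<Longrightarrow> 0 \<le> pgf p z"
  unfolding pgf_def by (rule integral_nonneg_AE) auto

lemma pgf_le1: "0 \<le> z \<Longrightarrow> z \<le> 1 \<Longrightarrow> pgf p z \<le> 1"
proof -
  assume a: "0 \<le> z" "z \<le> 1"
  have "pgf p z \<le> measure_pmf.expectation p (\<lambda>_. 1::real)"
    unfolding pgf_def
    by (rule integral_mono) (use a in \<open>auto intro!: power_le_one measure_pmf.integrable_const_bound[where B=1]\<close>)
  thus ?thesis by simp
qed

lemma pgf_1 [simp]: "pgf p 1 = 1"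
proof -
  have "pgf p 1 = measure_pmf.expectation p (\<lambda>_. 1::real)"
    unfolding pgf_def by (rule Bochner_Integration.integral_cong) auto
  thus ?thesis by simp
qed

lemma pgf_return [simp]: "pgf (return_pmf n) z = z ^ n"
  unfolding pgf_def by simp

lemma pgf_conv:
  assumes "0 \<le> z" "z \<le> 1"
  shows "pgf (conv_pmf p q) z = pgf p z * pgf q z"
proof -
  have "ennreal (pgf (conv_pmf p q) z) = (\<integral>\<^sup>+a. \<integral>\<^sup>+b. ennreal (z ^ a) * ennreal (z ^ b) \<partial>q \<partial>p)"
    unfolding pgf_nn[OF assms] conv_pmf_def
    by (simp add: nn_integral_pair_pmf' power_add ennreal_mult' assms)
  also have "\<dots> = (\<integral>\<^sup>+a. ennreal (z ^ a) * ennreal (pgf q z) \<partial>p)"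
    by (simp add: nn_integral_cmult pgf_nn[OF assms])
  also have "\<dots> = ennreal (pgf p z) * ennreal (pgf q z)"
    by (simp add: nn_integral_multc pgf_nn[OF assms])
  also have "\<dots> = ennreal (pgf p z * pgf q z)"
    by (simp add: ennreal_mult' pgf_nonneg assms)
  finally show ?thesis using assms by (simp add: pgf_nonneg)
qed

lemma pgf_bind:
  assumes "0 \<le> z" "z \<le> 1"
  shows "pgf (bind_pmf M f) z = measure_pmf.expectation M (\<lambda>x. pgf (f x) z)"
proof -
  have "ennreal (pgf (bind_pmf M f) z) = (\<integral>\<^sup>+x. ennreal (pgf (f x) z) \<partial>M)"
    unfolding pgf_nn[OF assms] by (simp add: pgf_nn[OF assms])
  also have "\<dots> = ennreal (measure_pmf.expectation M (\<lambda>x. pgf (f x) z))"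
    by (rule nn_integral_eq_integral)
       (auto intro!: measure_pmf.integrable_const_bound[where B=1] simp: pgf_nonneg pgf_le1 assms)
  finally show ?thesis using assms
    by (simp add: pgf_nonneg integral_nonneg_AE)
qed

lemma pgf_conv_pow:
  assumes "0 \<le> z" "z \<le> 1"
  shows "pgf (conv_pow P n) z = pgf P z ^ n"
  by (induction n) (simp_all add: pgf_conv assms)



lemma powser_zero_coeff_real:
  fixes c :: "nat \<Rightarrow> real"
  assumes S: "\<And>z. 0 < z \<Longrightarrow> z < 1 \<Longrightarrow> (\<lambda>k. c k * z ^ k) sums 0"
  shows "c n = 0"
proof (induction n rule: less_induct)
  case (less n)
  have sh: "(\<lambda>k. c (k+n) * z ^ k) sums 0" if z: "0 < z" "z < 1" for z
  proof -
    have "(\<lambda>k. c (k+n) * z ^ (k+n)) sums 0"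
      using sums_zero_iff_shift[of n "\<lambda>k. c k * z ^ k" 0] less S[OF z] by auto
    then have "(\<lambda>k. (c (k+n) * z ^ (k+n)) * inverse (z ^ n)) sums (0 * inverse (z ^ n))"
      by (rule sums_mult2)
    moreover have "\<And>k. (c (k+n) * z ^ (k+n)) * inverse (z ^ n) = c (k+n) * z ^ k"
      using z by (simp add: power_add)
    ultimately show ?thesis by simp
  qed
  define f where "f x = (\<Sum>k. c (k+n) * x ^ k)" for x :: real
  have "isCont f 0" unfolding f_def
    by (rule isCont_powser[where K="1/2"]) (use sh[of "1/2"] in \<open>auto simp: sums_iff\<close>)
  hence "(f \<longlongrightarrow> f 0) (at_right 0)"
    by (simp add: isCont_def filterlim_at_split)
  moreover have "f 0 = c n" unfolding f_def by simp
  moreover have "eventually (\<lambda>x. f x = 0) (at_right (0::real))"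
    unfolding eventually_at_right_field
    by (rule exI[of _ 1]) (auto simp: f_def sh sums_unique[symmetric])
  then have "(f \<longlongrightarrow> 0) (at_right 0)" by (rule tendsto_eventually)
  ultimately show "c n = 0" using tendsto_unique[of "at_right (0::real)"] by auto
qed

lemma powser_coeff_unique_real:
  fixes a b :: "nat \<Rightarrow> real"
  assumes "\<And>z. 0 < z \<Longrightarrow> z < 1 \<Longrightarrow> (\<lambda>k. a k * z ^ k) sums F z"
    and "\<And>z. 0 < z \<Longrightarrow> z < 1 \<Longrightarrow> (\<lambda>k. b k * z ^ k) sums F z"
  shows "a n = b n"
proof -
  have "(\<lambda>k. a k - b k) n = 0"
  proof (rule powser_zero_coeff_real)
    fix z :: real assume "0 < z" "z < 1"
    from sums_diff[OF assms(1)[OF this] assms(2)[OF this]]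
    show "(\<lambda>k. (a k - b k) * z ^ k) sums 0" by (simp add: algebra_simps)
  qed
  thus ?thesis by simp
qed

lemma pmf_eq_pgf:
  fixes p q :: "nat pmf"
  assumes "\<And>z. 0 < z \<Longrightarrow> z < 1 \<Longrightarrow> pgf p z = pgf q z"
  shows "p = q"
proof (rule pmf_eqI)
  fix n
  show "pmf p n = pmf q n"
  proof (rule powser_coeff_unique_real[where F="pgf q"])
    fix z :: real assume z: "0 < z" "z < 1"
    show "(\<lambda>k. pmf q k * z ^ k) sums pgf q z" using z by (intro pgf_sums) auto
    show "(\<lambda>k. pmf p k * z ^ k) sums pgf q z" using z pgf_sums[of z p] assms[OF z] by auto
  qed
qed



abbreviation tl_p :: "nat pmf \<Rightarrow> nat \<Rightarrow> real" where
  "tl_p p k \<equiv> measure_pmf.prob p {k<..}"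

lemma tl_p_0: "tl_p p 0 = 1 - pmf p 0"
proof -
  have "{0::nat<..} = UNIV - {0}" by auto
  hence "tl_p p 0 = measure_pmf.prob p (space (measure_pmf p) - {0})" by simp
  also have "\<dots> = 1 - pmf p 0" by (subst measure_pmf.prob_compl) (auto simp: measure_pmf_single)
  finally show ?thesis .
qed

lemma tl_p_Suc: "tl_p p k = tl_p p (Suc k) + pmf p (Suc k)"
proof -
  have "{k<..} = {Suc k<..} \<union> {Suc k}" by auto
  hence "tl_p p k = measure_pmf.prob p ({Suc k<..} \<union> {Suc k})" by simp
  also have "\<dots> = tl_p p (Suc k) + measure_pmf.prob p {Suc k}"
    by (rule measure_pmf.finite_measure_Union) auto
  finally show ?thesis by (simp add: measure_pmf_single)
qed

lemma tail_sums:
  assumes "integrable (measure_pmf p) real"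
  shows "(\<lambda>k. tl_p p k) sums measure_pmf.expectation p real"
proof -
  have ind: "(\<Sum>k. indicator {k<..} x :: ennreal) = ennreal (real x)" for x :: nat
  proof -
    have "(\<Sum>k. indicator {k<..} x :: ennreal) = (\<Sum>k\<in>{..<x}. indicator {k<..} x)"
      by (rule suminf_finite) auto
    also have "\<dots> = (\<Sum>k\<in>{..<x}. 1)" by (rule sum.cong) auto
    finally show ?thesis by (simp add: ennreal_of_nat_eq_real_of_nat)
  qed
  have "ennreal (measure_pmf.expectation p real) = (\<integral>\<^sup>+x. ennreal (real x) \<partial>p)"
    using assms by (subst nn_integral_eq_integral) auto
  also have "\<dots> = (\<integral>\<^sup>+x. (\<Sum>k. indicator {k<..} x) \<partial>p)" by (simp add: ind)
  also have "\<dots> = (\<Sum>k. \<integral>\<^sup>+x. indicator {k<..} x \<partial>p)"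
    by (rule nn_integral_suminf) auto
  also have "\<dots> = (\<Sum>k. ennreal (tl_p p k))"
    by (simp add: measure_pmf.emeasure_eq_measure)
  finally have "(\<lambda>k. ennreal (tl_p p k)) sums ennreal (measure_pmf.expectation p real)"
    by (metis summable_sums summableI)
  thus ?thesis by (subst (asm) sums_ennreal) auto
qed

lemma tail_gf_sums:
  assumes "integrable (measure_pmf p) real" "0 \<le> z" "z \<le> 1"
  shows "(\<lambda>k. z ^ k * tl_p p k) sums tail_gf p z"
proof -
  have "summable (\<lambda>k. z ^ k * tl_p p k)"
    by (rule summable_comparison_test'[OF sums_summable[OF tail_sums[OF assms(1)]], where N=0])
       (use assms in \<open>auto intro!: mult_left_le_one_le power_le_one\<close>)
  thus ?thesis unfolding tail_gf_def by (rule summable_sums)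
qed

lemma tail_gf_identity:
  assumes "integrable (measure_pmf p) real" "0 \<le> z" "z \<le> 1"
  shows "1 - pgf p z = (1 - z) * tail_gf p z"
proof -
  have s1: "(\<lambda>k. pmf p (Suc k) * z ^ (Suc k)) sums (pgf p z - pmf p 0)"
    using pgf_sums[of z p] assms by (subst sums_Suc_iff) auto
  have s2: "(\<lambda>k. z ^ (Suc k) * tl_p p k) sums (z * tail_gf p z)"
    using sums_mult[OF tail_gf_sums[OF assms], of z] by (simp add: mult_ac)
  have s3: "(\<lambda>k. z ^ (Suc k) * tl_p p (Suc k)) sums (tail_gf p z - tl_p p 0)"
    using tail_gf_sums[OF assms] by (subst sums_Suc_iff) auto
  have "(\<lambda>k. z ^ (Suc k) * tl_p p k - z ^ (Suc k) * tl_p p (Suc k)) sums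
        (z * tail_gf p z - (tail_gf p z - tl_p p 0))"
    by (rule sums_diff[OF s2 s3])
  moreover have "(\<lambda>k. z ^ (Suc k) * tl_p p k - z ^ (Suc k) * tl_p p (Suc k)) =
                 (\<lambda>k. pmf p (Suc k) * z ^ (Suc k))"
    by (rule ext) (subst tl_p_Suc, simp add: algebra_simps)
  ultimately have "pgf p z - pmf p 0 = z * tail_gf p z - (tail_gf p z - tl_p p 0)"
    using s1 sums_unique2 by metis
  thus ?thesis by (simp add: tl_p_0 algebra_simps)
qed

lemma tail_gf_cont:
  assumes "integrable (measure_pmf p) real"
  shows "continuous_on {0..1} (tail_gf p)"
proof -
  have "uniform_limit {0..1} (\<lambda>n x. \<Sum>i<n. x ^ i * tl_p p i) (\<lambda>x. \<Sum>i. x ^ i * tl_p p i) sequentially"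
    by (rule Weierstrass_m_test[where M="tl_p p"])
       (auto intro!: sums_summable[OF tail_sums[OF assms]] mult_left_le_one_le power_le_one simp: abs_mult)
  hence "continuous_on {0..1} (\<lambda>x. \<Sum>i. x ^ i * tl_p p i)"
    by (rule uniform_limit_theorem[rotated]) (auto intro!: always_eventually continuous_intros)
  thus ?thesis unfolding tail_gf_def[abs_def] .
qed

lemma tail_gf_nonneg:
  assumes "integrable (measure_pmf p) real" "0 \<le> z" "z \<le> 1"
  shows "0 \<le> tail_gf p z"
  by (rule sums_le[OF _ sums_zero tail_gf_sums[OF assms]]) (use assms in auto)

lemma tail_gf_mono:
  assumes "integrable (measure_pmf p) real" "0 \<le> z" "z \<le> y" "y \<le> 1"
  shows "tail_gf p z \<le> tail_gf p y"
  using assms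
  by (intro sums_le[OF _ tail_gf_sums tail_gf_sums]) (auto intro!: mult_right_mono power_mono)

lemma tail_gf_at1:
  assumes "integrable (measure_pmf p) real"
  shows "tail_gf p 1 = measure_pmf.expectation p real"
  using tail_gf_sums[OF assms, of 1] tail_sums[OF assms] sums_unique2 by force

lemma tail_gf_le_mean:
  assumes "integrable (measure_pmf p) real" "0 \<le> z" "z \<le> 1"
  shows "tail_gf p z \<le> measure_pmf.expectation p real"
  using tail_gf_mono[of p z 1] assms tail_gf_at1[OF assms(1)] by auto

lemma mean_ge_tl0:
  assumes "integrable (measure_pmf p) real"
  shows "1 - pmf p 0 \<le> measure_pmf.expectation p real"
proof -
  have "tl_p p 0 \<le> (\<Sum>k. tl_p p k)"
    by (rule sum_le_suminf[of _ "{0}", simplified]) (auto intro: sums_summable[OF tail_sums[OF assms]])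
  thus ?thesis using tail_sums[OF assms] by (simp add: tl_p_0 sums_iff)
qed



locale setting =
  fixes pX pY :: "nat pmf" and b1 b2 m0 :: real
  assumes intX2: "integrable (measure_pmf pX) (\<lambda>k. real k ^ 2)"
    and intY2: "integrable (measure_pmf pY) (\<lambda>k. real k ^ 2)"
    and b1: "b1 > 0" and b2: "b2 > 0" and m0: "m0 > 0"
    and bal: "b1 * (measure_pmf.expectation pX real - 1) + b2 * measure_pmf.expectation pY real = 0"
    and pY0: "pmf pY 0 < 1"
begin

abbreviation "mX \<equiv> measure_pmf.expectation pX real"
abbreviation "mY \<equiv> measure_pmf.expectation pY real"
abbreviation "phiX \<equiv> tail_gf pX"
abbreviation "phiY \<equiv> tail_gf pY"
abbreviation "ft \<equiv> (\<lambda>z. phiY z / (1 - phiX z))"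
abbreviation "cc \<equiv> m0 * (b2 / b1)"
abbreviation "Gt \<equiv> (\<lambda>z. exp (- m0 * (b2 / b1) * integral {z..1} ft))"
abbreviation "G \<equiv> (\<lambda>z. exp (- m0 * (b2 / b1) *
                 integral {z..1} (\<lambda>s. (1 - pgf pY s) / (pgf pX s - s))))"

lemma int1_of_int2:
  assumes "integrable (measure_pmf p) (\<lambda>k. real k ^ 2)"
  shows "integrable (measure_pmf p) real"
proof -
  have "summable (\<lambda>k. \<bar>pmf p k * real k ^ 2\<bar>)" using assms by (simp add: integrable_pmf_nat_iff)
  hence "summable (\<lambda>k. \<bar>pmf p k * real k\<bar>)"
    by (rule summable_comparison_test'[where N=0])
       (auto simp: abs_mult power2_eq_square intro!: mult_left_mono mult_le_cancel_left1[THEN iffD2])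
  thus ?thesis by (simp add: integrable_pmf_nat_iff)
qed

lemma intX: "integrable (measure_pmf pX) real" by (rule int1_of_int2[OF intX2])
lemma intY: "integrable (measure_pmf pY) real" by (rule int1_of_int2[OF intY2])

lemma mY_pos: "mY > 0"
  using mean_ge_tl0[OF intY] pY0 by linarith

lemma mX_nonneg: "mX \<ge> 0"
  by (rule integral_nonneg_AE) auto

lemma mX_less1: "mX < 1"
proof -
  have "b1 * (mX - 1) < 0" using bal b2 mY_pos by (smt (verit) mult_pos_pos)
  thus ?thesis using b1 by (simp add: mult_less_0_iff)
qed

lemma bal': "b2 * mY = b1 * (1 - mX)"
  using bal by (simp add: algebra_simps)

lemma phiX_le: "0 \<le> z \<Longrightarrow> z \<le> 1 \<Longrightarrow> phiX z \<le> mX"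
  using tail_gf_le_mean[OF intX] by auto

lemma den_pos: "0 \<le> z \<Longrightarrow> z \<le> 1 \<Longrightarrow> 1 - phiX z \<ge> 1 - mX"
  using phiX_le by auto

lemma den_pos': "0 \<le> z \<Longrightarrow> z \<le> 1 \<Longrightarrow> 1 - phiX z > 0"
  using den_pos mX_less1 by (smt (verit))

lemma ft_cont: "continuous_on {0..1} ft"
  by (intro continuous_intros tail_gf_cont intX intY) (use den_pos' in force)

lemma ft_nonneg: "0 \<le> z \<Longrightarrow> z \<le> 1 \<Longrightarrow> 0 \<le> ft z"
  using den_pos'[of z] tail_gf_nonneg[OF intY] by auto

lemma pX_minus: "0 \<le> z \<Longrightarrow> z \<le> 1 \<Longrightarrow> pgf pX z - z = (1 - z) * (1 - phiX z)"
  using tail_gf_identity[OF intX] by (simp add: algebra_simps)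

lemma pY_minus: "0 \<le> z \<Longrightarrow> z \<le> 1 \<Longrightarrow> pgf pY z - 1 = - ((1 - z) * phiY z)"
  using tail_gf_identity[OF intY] by (simp add: algebra_simps)

lemma f_eq_ft: "0 \<le> z \<Longrightarrow> z < 1 \<Longrightarrow> (1 - pgf pY z) / (pgf pX z - z) = ft z"
proof -
  assume z: "0 \<le> z" "z < 1"
  have a: "1 - pgf pY z = (1 - z) * phiY z" using pY_minus[of z] z by linarith
  have b: "pgf pX z - z = (1 - z) * (1 - phiX z)" using pX_minus[of z] z by linarith
  have "(1 - pgf pY z) / (pgf pX z - z) = ((1 - z) * phiY z) / ((1 - z) * (1 - phiX z))"
    by (simp only: a b)
  also have "\<dots> = ft z" using z by simp
  finally show ?thesis .
qed

lemma int_eq: "0 \<le> z \<Longrightarrow> integral {z..1} (\<lambda>s. (1 - pgf pY s) / (pgf pX s - s)) = integral {z..1} ft"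
    by (rule integral_spike[where S="{1}"]) (auto simp: f_eq_ft)

lemma G_eq_Gt: "0 \<le> z \<Longrightarrow> z \<le> 1 \<Longrightarrow> G z = Gt z"
  by (simp only: int_eq)

lemma Gt_deriv:
  assumes "0 \<le> z" "z \<le> 1"
  shows "(Gt has_real_derivative cc * ft z * Gt z) (at z within {0..1})"
proof -
  have "((\<lambda>x. integral {x..1} ft) has_real_derivative - ft z) (at z within {0..1})"
    by (rule integral_has_real_derivative'[OF ft_cont]) (use assms in auto)
  from DERIV_cmult[OF this, of "- m0 * (b2 / b1)"]
  have "((\<lambda>x. - m0 * (b2 / b1) * integral {x..1} ft) has_real_derivative (- m0 * (b2 / b1) * - ft z)) (at z within {0..1})" .
  from DERIV_chain2[OF DERIV_exp this]
  show ?thesis by (simp add: mult_ac)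
qed

lemma Gt_pos: "Gt z > 0" by simp

lemma Gt_1: "Gt 1 = 1" by simp

lemma Gt_cont: "continuous_on {0..1} Gt"
  by (rule DERIV_continuous_on[OF Gt_deriv]) auto

lemma ode_unique:
  assumes hc: "continuous_on {0..1} h" and h1: "h 1 = 1"
    and hd: "\<And>z. 0 \<le> z \<Longrightarrow> z < 1 \<Longrightarrow> (h has_real_derivative cc * ft z * h z) (at z within {0..1})"
    and z: "z \<in> {0..1}"
  shows "h z = Gt z"
proof -
  define k where "k x = h x / Gt x" for x
  have kc: "continuous_on {0..1} k" unfolding k_def
    by (intro continuous_on_divide hc Gt_cont) auto
  have kd: "(k has_derivative (\<lambda>h. 0)) (at x within {0..1})" if x: "x \<in> {0..1} - {1}" for x
  proof -
    have "(k has_real_derivative ((cc * ft x * h x) * Gt x - h x * (cc * ft x * Gt x)) / (Gt x * Gt x))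
           (at x within {0..1})"
      unfolding k_def by (rule DERIV_divide[OF hd Gt_deriv]) (use x in auto)
    hence "(k has_real_derivative 0) (at x within {0..1})" by (simp add: algebra_simps)
    thus ?thesis by (simp add: has_field_derivative_def mult_zero_left[abs_def])
  qed
  have k0: "\<And>x. x \<in> {0..1} \<Longrightarrow> k x = k 0"
    by (rule has_derivative_zero_unique_strong_interval[of "{1}" 0 1 k, OF _ kc refl kd]) auto
  have "k 1 = 1" by (simp add: k_def h1)
  hence "k z = 1" using k0[of 1] k0[OF z] by simp
  thus ?thesis by (simp add: k_def)
qed

lemma G_C1: "C1_stationary_solution pX pY b1 b2 m0 G"
  unfolding C1_stationary_solution_def
proof (intro exI[of _ "\<lambda>z. cc * ft z * Gt z"] conjI ballI)
  show "continuous_on {0..1} (\<lambda>z. cc * ft z * Gt z)"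
    by (intro continuous_intros ft_cont Gt_cont)
next
  fix z :: real assume z: "z \<in> {0..1}"
  hence z0: "0 \<le> z" "z \<le> 1" by auto
  show "(G has_real_derivative cc * ft z * Gt z) (at z within {0..1})"
  proof (rule has_field_derivative_transform_within[OF Gt_deriv[OF z0] zero_less_one z])
    fix x :: real assume "x \<in> {0..1}"
    hence "0 \<le> x" "x \<le> 1" by auto
    thus "Gt x = G x" by (intro sym[OF G_eq_Gt])
  qed
next
  show "G 1 = 1" using G_eq_Gt[of 1] by simp
next
  fix z :: real assume z: "z \<in> {0..1}"
  hence z0: "0 \<le> z" "z \<le> 1" by auto
  have d: "1 - phiX z \<noteq> 0" using den_pos'[OF z0] by auto
  have g: "G z = Gt z" using z0 by (rule G_eq_Gt)
  have "m0 * b2 * (pgf pY z - 1) * G z + b1 * (pgf pX z - z) * (cc * ft z * Gt z) =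
        m0 * b2 * (- ((1 - z) * phiY z)) * Gt z + b1 * ((1 - z) * (1 - phiX z)) * (cc * ft z * Gt z)"
    by (simp only: g pX_minus[OF z0] pY_minus[OF z0])
  also have "\<dots> = 0" using d b1 by (simp add: field_simps)
  finally show "m0 * b2 * (pgf pY z - 1) * G z + b1 * (pgf pX z - z) * (cc * ft z * Gt z) = 0" .
qed

lemma C1_unique:
  assumes "C1_stationary_solution pX pY b1 b2 m0 h" "z \<in> {0..1}"
  shows "h z = G z"
proof -
  obtain h' where hc': "continuous_on {0..1} h'"
    and hd: "\<And>z. z \<in> {0..1} \<Longrightarrow> (h has_real_derivative h' z) (at z within {0..1})"
    and h1: "h 1 = 1"
    and he: "\<And>z. z \<in> {0..1} \<Longrightarrow> m0 * b2 * (pgf pY z - 1) * h z + b1 * (pgf pX z - z) * h' z = 0"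
    using assms(1) unfolding C1_stationary_solution_def by blast
  have "h z = Gt z"
  proof (rule ode_unique[OF DERIV_continuous_on[OF hd] h1 _ assms(2)])
    fix x :: real assume x: "0 \<le> x" "x < 1"
    have d: "1 - phiX x > 0" using den_pos'[of x] x by auto
    have "m0 * b2 * (-((1 - x) * phiY x)) * h x + b1 * ((1 - x) * (1 - phiX x)) * h' x = 0"
      using he[of x] x by (simp add: pX_minus pY_minus)
    hence "(1 - x) * (b1 * (1 - phiX x) * h' x - m0 * b2 * phiY x * h x) = 0"
      by (simp add: algebra_simps)
    hence "b1 * (1 - phiX x) * h' x = m0 * b2 * phiY x * h x" using x by simp
    hence "h' x = cc * ft x * h x" using d b1 by (simp add: field_simps)
    thus "(h has_real_derivative cc * ft x * h x) (at x within {0..1})"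
      using hd[of x] x by simp
  qed auto
  moreover have "G z = Gt z" using assms(2) by (intro G_eq_Gt) auto
  ultimately show ?thesis by (rule trans[OF _ sym])
qed

end


lemma embed_pmf_nat:
  fixes a :: "nat \<Rightarrow> real"
  assumes nn: "\<And>k. 0 \<le> a k" and s: "a sums 1"
  shows "pmf (embed_pmf a) k = a k"
proof (rule pmf_embed_pmf)
  show "\<And>x. 0 \<le> a x" by (rule nn)
  have "(\<lambda>i. ennreal (a i)) sums ennreal 1" using s nn by (subst sums_ennreal) auto
  hence "(\<Sum>i. ennreal (a i)) = 1" by (simp add: sums_iff)
  thus "(\<integral>\<^sup>+x. ennreal (a x) \<partial>count_space UNIV) = 1"
    by (simp add: nn_integral_count_space_nat)
qed

lemma pgf_embed_sums:
  fixes a :: "nat \<Rightarrow> real"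
  assumes nn: "\<And>k. 0 \<le> a k" and s: "a sums 1" and z: "\<bar>z\<bar> \<le> 1"
  shows "(\<lambda>k. a k * z ^ k) sums pgf (embed_pmf a) z"
  using pgf_sums[OF z, of "embed_pmf a"] by (simp add: embed_pmf_nat[OF nn s])

context setting begin

lemma P_exists: "mX > 0 \<Longrightarrow> \<exists>P. \<forall>z\<in>{0..1}. pgf P z = phiX z / mX"
proof -
  assume m: "mX > 0"
  define a where "a k = tl_p pX k / mX" for k
  have nn: "\<And>k. 0 \<le> a k" unfolding a_def using m by auto
  have s: "a sums 1" unfolding a_def using sums_divide[OF tail_sums[OF intX], of mX] m by simp
  show ?thesis
  proof (intro exI ballI)
    fix z :: real assume z: "z \<in> {0..1}"
    have "(\<lambda>k. a k * z ^ k) sums (phiX z / mX)"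
      using sums_divide[OF tail_gf_sums[OF intX, of z], of mX] z by (simp add: a_def mult_ac)
    thus "pgf (embed_pmf a) z = phiX z / mX"
      using pgf_embed_sums[OF nn s, of z] z sums_unique2 by force
  qed
qed

lemma Q_exists: "\<exists>Q. \<forall>z\<in>{0..1}. pgf Q z = b2 / b1 * inverse (1 - mX) * phiY z"
proof -
  define \<kappa> where "\<kappa> = b2 / b1 * inverse (1 - mX)"
  have kp: "\<kappa> > 0" unfolding \<kappa>_def using b1 b2 mX_less1 by auto
  have k1: "\<kappa> * mY = 1" unfolding \<kappa>_def using bal' b1 mX_less1 by (simp add: field_simps)
  define a where "a k = \<kappa> * tl_p pY k" for k
  have nn: "\<And>k. 0 \<le> a k" unfolding a_def using kp by auto
  have s: "a sums 1" unfolding a_def using sums_mult[OF tail_sums[OF intY], of \<kappa>] k1 by simp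
  show ?thesis
  proof (intro exI ballI)
    fix z :: real assume z: "z \<in> {0..1}"
    have "(\<lambda>k. a k * z ^ k) sums (\<kappa> * phiY z)"
      using sums_mult[OF tail_gf_sums[OF intY, of z], of \<kappa>] z by (simp add: a_def mult_ac)
    thus "pgf (embed_pmf a) z = b2 / b1 * inverse (1 - mX) * phiY z"
      using pgf_embed_sums[OF nn s, of z] z sums_unique2 unfolding \<kappa>_def by force
  qed
qed

lemma Gamma_pgf: "z \<in> {0..1} \<Longrightarrow> pgf (geometric_pmf (1 - mX)) z = (1 - mX) / (1 - mX * z)"
proof -
  assume z: "z \<in> {0..1}"
  have p: "0 < 1 - mX" "1 - mX \<le> 1" using mX_less1 mX_nonneg by auto
  have "\<bar>mX * z\<bar> < 1" using z mX_less1 mX_nonneg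
    by (auto simp: abs_mult intro: le_less_trans[OF mult_right_le_one_le])
  hence "(\<lambda>n. (1 - mX) * (mX * z) ^ n) sums ((1 - mX) * (1 / (1 - mX * z)))"
    by (intro sums_mult geometric_sums) auto
  moreover have "(\<lambda>n. pmf (geometric_pmf (1 - mX)) n * z ^ n) = (\<lambda>n. (1 - mX) * (mX * z) ^ n)"
    using p by (auto simp: power_mult_distrib)
  ultimately show ?thesis using pgf_sums[of z "geometric_pmf (1 - mX)"] z sums_unique2 by force
qed

lemma W_pgf:
  assumes hP: "mX > 0 \<longrightarrow> (\<forall>z\<in>{0..1}. pgf P z = phiX z / mX)"
    and hQ: "\<forall>z\<in>{0..1}. pgf Q z = b2 / b1 * inverse (1 - mX) * phiY z"
    and hG: "\<forall>z\<in>{0..1}. pgf \<Gamma> z = (1 - mX) / (1 - mX * z)"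
    and z: "z \<in> {0..1}"
  shows "pgf (conv_pmf Q (bind_pmf \<Gamma> (\<lambda>n. conv_pow P n))) z = b2 / b1 * ft z"
proof -
  have z0: "0 \<le> z" "z \<le> 1" using z by auto
  define w where "w = pgf P z"
  have w: "w \<in> {0..1}" unfolding w_def using z0 by (auto intro: pgf_nonneg pgf_le1)
  have mw: "mX * w = phiX z"
  proof (cases "mX > 0")
    case True thus ?thesis using hP z by (simp add: w_def)
  next
    case False
    hence "mX = 0" using mX_nonneg by auto
    moreover have "0 \<le> phiX z" "phiX z \<le> mX" using tail_gf_nonneg[OF intX z0] phiX_le[OF z0] by auto
    ultimately show ?thesis by simp
  qed
  have "pgf (bind_pmf \<Gamma> (\<lambda>n. conv_pow P n)) z = measure_pmf.expectation \<Gamma> (\<lambda>n. w ^ n)"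
    unfolding pgf_bind[OF z0] w_def by (simp add: pgf_conv_pow[OF z0])
  also have "\<dots> = pgf \<Gamma> w" by (simp add: pgf_def)
  also have "\<dots> = (1 - mX) / (1 - phiX z)" using hG w mw by simp
  finally have b: "pgf (bind_pmf \<Gamma> (\<lambda>n. conv_pow P n)) z = (1 - mX) / (1 - phiX z)" .
  have q: "pgf Q z = b2 / b1 * inverse (1 - mX) * phiY z" using hQ z by blast
  have d1: "1 - mX \<noteq> 0" using mX_less1 by auto
  have d2: "1 - phiX z \<noteq> 0" using den_pos'[OF z0] by auto
  have inv1: "inverse (1 - mX) * (1 - mX) = 1" using d1 by simp
  have "b2 / b1 * inverse (1 - mX) * phiY z * ((1 - mX) / (1 - phiX z)) =
        (b2 / b1 * phiY z * inverse (1 - phiX z)) * (inverse (1 - mX) * (1 - mX))"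
    by (simp only: divide_inverse mult_ac)
  also have "\<dots> = b2 / b1 * ft z" by (simp add: inv1 divide_inverse)
  finally show ?thesis unfolding pgf_conv[OF z0] b q .
qed

end


lemma pgf_eq_suminf: "\<bar>z\<bar> \<le> 1 \<Longrightarrow> pgf p z = (\<Sum>k. pmf p k * z ^ k)"
  using pgf_sums sums_unique by metis

lemma pgf_summable: "\<bar>z\<bar> \<le> 1 \<Longrightarrow> summable (\<lambda>k. pmf p k * z ^ k)"
  by (rule sums_summable[OF pgf_sums])

lemma pgf_cont: "continuous_on {0..1} (pgf p)"
proof -
  have "uniform_limit {0..1} (\<lambda>n x. \<Sum>i<n. pmf p i * x ^ i) (\<lambda>x. \<Sum>i. pmf p i * x ^ i) sequentially"
    by (rule Weierstrass_m_test[where M="pmf p"])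
       (auto intro!: sums_summable[OF pmf_sums_1] mult_left_le power_le_one simp: abs_mult)
  hence "continuous_on {0..1} (\<lambda>x. \<Sum>i. pmf p i * x ^ i)"
    by (rule uniform_limit_theorem[rotated]) (auto intro!: always_eventually continuous_intros)
  thus ?thesis by (rule continuous_on_cong[THEN iffD1, rotated 2]) (auto simp: pgf_eq_suminf)
qed

lemma diffs_sums:
  assumes "\<bar>z\<bar> < 1"
  shows "(\<lambda>k. diffs (pmf p) k * z ^ k) sums (\<Sum>k. diffs (pmf p) k * z ^ k)"
proof -
  have "summable (\<lambda>k. diffs (pmf p) k * z ^ k)"
    by (rule termdiff_converges[where K=1]) (use assms in \<open>auto intro: pgf_summable\<close>)
  thus ?thesis by (rule summable_sums)
qed

lemma pgf_deriv:
  assumes "\<bar>z\<bar> < 1"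
  shows "(pgf p has_real_derivative (\<Sum>k. diffs (pmf p) k * z ^ k)) (at z)"
proof -
  have "((\<lambda>x. \<Sum>k. pmf p k * x ^ k) has_real_derivative (\<Sum>k. diffs (pmf p) k * z ^ k)) (at z)"
    by (rule termdiffs_strong[where K=1]) (use assms pmf_sums_1 in \<open>auto intro: sums_summable\<close>)
  thus ?thesis
    by (rule has_field_derivative_transform_within_open[where S="{-1<..<1}"])
       (use assms in \<open>auto simp: pgf_eq_suminf\<close>)
qed

definition cpois :: "real \<Rightarrow> nat pmf \<Rightarrow> nat pmf" where
  "cpois r J = bind_pmf (poisson_pmf r) (conv_pow J)"

lemma pgf_cpois:
  assumes r: "r > 0" and z: "0 \<le> z" "z \<le> 1"
  shows "pgf (cpois r J) z = exp (r * (pgf J z - 1))"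
proof -
  define t where "t = pgf J z"
  have t: "0 \<le> t" "t \<le> 1" unfolding t_def using z by (auto intro: pgf_nonneg pgf_le1)
  have "pgf (cpois r J) z = measure_pmf.expectation (poisson_pmf r) (\<lambda>n. t ^ n)"
    unfolding cpois_def pgf_bind[OF z] t_def by (simp add: pgf_conv_pow[OF z])
  also have "\<dots> = pgf (poisson_pmf r) t" by (simp add: pgf_def)
  also have "\<dots> = exp (r * (t - 1))"
  proof -
    have "(\<lambda>n. (r * t) ^ n / fact n * exp (- r)) sums (exp (r * t) * exp (- r))"
      using sums_mult2[OF exp_converges[of "r * t"], of "exp (-r)"] by (simp add: divide_inverse mult_ac)
    moreover have "(\<lambda>n. pmf (poisson_pmf r) n * t ^ n) = (\<lambda>n. (r * t) ^ n / fact n * exp (- r))"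
      using r by (auto simp: power_mult_distrib)
    ultimately show ?thesis using pgf_sums[of t "poisson_pmf r"] t sums_unique2
      by (metis abs_of_nonneg exp_add add_uminus_conv_diff right_diff_distrib mult.right_neutral)
  qed
  finally show ?thesis by (simp add: t_def)
qed

lemma cpois_inf_div:
  assumes r: "r > 0"
  shows "inf_divisible (cpois r J)"
  unfolding inf_divisible_def
proof (intro allI impI)
  fix n :: nat assume n: "n \<ge> 1"
  have "conv_pow (cpois (r / n) J) n = cpois r J"
  proof (rule pmf_eq_pgf)
    fix z :: real assume z: "0 < z" "z < 1"
    have e: "of_nat n * (r / n * (pgf J z - 1)) = r * (pgf J z - 1)" using n by simp
    have "pgf (conv_pow (cpois (r / n) J) n) z = exp (r / n * (pgf J z - 1)) ^ n"
      using z r n by (simp add: pgf_conv_pow pgf_cpois)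
    also have "\<dots> = exp (of_nat n * (r / n * (pgf J z - 1)))" by (rule exp_of_nat_mult[symmetric])
    also have "\<dots> = exp (r * (pgf J z - 1))" by (simp only: e)
    also have "\<dots> = pgf (cpois r J) z" using z r by (simp add: pgf_cpois)
    finally show "pgf (conv_pow (cpois (r / n) J) n) z = pgf (cpois r J) z" .
  qed
  thus "\<exists>h. conv_pow h n = cpois r J" by blast
qed



context setting begin

lemma main_g:
  "\<exists>g. (\<forall>z\<in>{0..1}. pgf g z = G z) \<and> inf_divisible g
         \<and> integrable (measure_pmf g) real
         \<and> (\<forall>P Q \<Gamma>.
              (mX > 0 \<longrightarrow> (\<forall>z\<in>{0..1}. pgf P z = tail_gf pX z / mX)) \<longrightarrow>
              (\<forall>z\<in>{0..1}. pgf Q z = b2 / b1 * inverse (1 - mX) * tail_gf pY z) \<longrightarrow>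
              (\<forall>z\<in>{0..1}. pgf \<Gamma> z = (1 - mX) / (1 - mX * z)) \<longrightarrow>
              (\<forall>k. size_biased g k =
                 pmf (conv_pmf g (conv_pmf (return_pmf 1)
                        (conv_pmf Q (bind_pmf \<Gamma> (\<lambda>n. conv_pow P n))))) k))"
proof -
  have "\<exists>P. mX > 0 \<longrightarrow> (\<forall>z\<in>{0..1}. pgf P z = phiX z / mX)"
  proof (cases "mX > 0")
    case True thus ?thesis using P_exists by blast
  next
    case False thus ?thesis by (intro exI[of _ "return_pmf 0"]) simp
  qed
  then obtain P0 where hP0: "mX > 0 \<longrightarrow> (\<forall>z\<in>{0..1}. pgf P0 z = phiX z / mX)" by blast
  obtain Q0 where hQ0: "\<forall>z\<in>{0..1}. pgf Q0 z = b2 / b1 * inverse (1 - mX) * phiY z"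
    using Q_exists by blast
  define \<Gamma>0 where "\<Gamma>0 = geometric_pmf (1 - mX)"
  have hG0: "\<forall>z\<in>{0..1}. pgf \<Gamma>0 z = (1 - mX) / (1 - mX * z)"
    unfolding \<Gamma>0_def using Gamma_pgf by blast
  define W0 where "W0 = conv_pmf Q0 (bind_pmf \<Gamma>0 (\<lambda>n. conv_pow P0 n))"
  have W0: "\<And>z. z \<in> {0..1} \<Longrightarrow> pgf W0 z = b2 / b1 * ft z"
    unfolding W0_def by (rule W_pgf[OF hP0 hQ0 hG0])
  define w where "w = pmf W0"
  define lam where "lam = (\<Sum>k. w k / Suc k)"
  have wsum: "summable (\<lambda>k. w k / Suc k)"
    by (rule summable_comparison_test'[OF sums_summable[OF pmf_sums_1[of W0]], where N=0])
       (auto simp: w_def divide_le_eq mult_le_cancel_left1 leD)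
  hence ws: "(\<lambda>k. w k / Suc k) sums lam" unfolding lam_def by (rule summable_sums)
  have lam_pos: "lam > 0"
  proof -
    obtain i where "i \<in> set_pmf W0" using set_pmf_not_empty[of W0] by blast
    hence "w i > 0" unfolding w_def by (rule pmf_positive)
    hence wi: "w i / Suc i > 0" by simp
    show ?thesis unfolding lam_def by (rule suminf_pos2[OF wsum _ wi]) (auto simp: w_def)
  qed
  define jf where "jf k = (if k = 0 then 0 else w (k - 1) / k / lam)" for k
  have jnn: "\<And>k. 0 \<le> jf k" unfolding jf_def w_def using lam_pos by auto
  have js: "jf sums 1"
  proof -
    have "(\<lambda>k. jf (Suc k)) = (\<lambda>k. w k / Suc k / lam)" by (auto simp: jf_def)
    moreover have "(\<lambda>k. w k / Suc k / lam) sums 1"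
      using sums_divide[OF ws, of lam] lam_pos by simp
    ultimately have "(\<lambda>k. jf (Suc k)) sums 1" by simp
    thus ?thesis by (subst (asm) sums_Suc_iff) (simp add: jf_def)
  qed
  define J where "J = embed_pmf jf"
  have pJ: "pmf J k = jf k" for k unfolding J_def by (rule embed_pmf_nat[OF jnn js])
  have dJ: "(\<Sum>k. diffs (pmf J) k * z ^ k) = pgf W0 z / lam" if z: "0 \<le> z" "z < 1" for z
  proof -
    have "(\<lambda>k. diffs (pmf J) k * z ^ k) = (\<lambda>k. pmf W0 k * z ^ k / lam)"
      using lam_pos by (auto simp: diffs_def pJ jf_def w_def)
    moreover have "(\<lambda>k. pmf W0 k * z ^ k / lam) sums (pgf W0 z / lam)"
      using z by (intro sums_divide pgf_sums) auto
    ultimately show ?thesis by (simp add: sums_iff)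
  qed
  define r where "r = m0 * lam"
  have r: "r > 0" unfolding r_def using m0 lam_pos by simp
  define g where "g = cpois r J"
  have pg: "pgf g z = Gt z" if z: "z \<in> {0..1}" for z
  proof (rule ode_unique[OF pgf_cont _ _ z])
    show "pgf g 1 = 1" by simp
  next
    fix z :: real assume z: "0 \<le> z" "z < 1"
    have d: "(pgf J has_real_derivative pgf W0 z / lam) (at z)"
      using pgf_deriv[of z J] z dJ[OF z] by simp
    have "((\<lambda>x. exp (r * (pgf J x - 1))) has_real_derivative
            exp (r * (pgf J z - 1)) * (r * (pgf W0 z / lam))) (at z)"
      by (rule derivative_eq_intros d refl | simp)+
    moreover have "exp (r * (pgf J z - 1)) * (r * (pgf W0 z / lam)) = cc * ft z * pgf g z"
    proof -
      have pc: "pgf g z = exp (r * (pgf J z - 1))" using z by (simp add: g_def pgf_cpois[OF r])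
      have w0: "pgf W0 z = b2 / b1 * ft z" using z by (intro W0) auto
      show ?thesis unfolding pc w0 using lam_pos by (simp add: r_def)
    qed
    ultimately have "((\<lambda>x. exp (r * (pgf J x - 1))) has_real_derivative cc * ft z * pgf g z)
                       (at z within {0..1})"
      by (auto intro: has_field_derivative_at_within)
    thus "(pgf g has_real_derivative cc * ft z * pgf g z) (at z within {0..1})"
      by (rule has_field_derivative_transform_within[OF _ zero_less_one])
         (use z r in \<open>auto simp: g_def pgf_cpois\<close>)
  qed
  have key: "real k * pmf g k = m0 * pmf (conv_pmf g (conv_pmf (return_pmf 1)
                        (conv_pmf Q (bind_pmf \<Gamma> (\<lambda>n. conv_pow P n))))) k"
    if hP: "mX > 0 \<longrightarrow> (\<forall>z\<in>{0..1}. pgf P z = phiX z / mX)"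
    and hQ: "\<forall>z\<in>{0..1}. pgf Q z = b2 / b1 * inverse (1 - mX) * phiY z"
    and hG: "\<forall>z\<in>{0..1}. pgf \<Gamma> z = (1 - mX) / (1 - mX * z)" for P Q \<Gamma> k
  proof -
    define R where "R = conv_pmf g (conv_pmf (return_pmf 1) (conv_pmf Q (bind_pmf \<Gamma> (\<lambda>n. conv_pow P n))))"
    have "real k * pmf g k = m0 * pmf R k"
    proof (rule powser_coeff_unique_real[where F="\<lambda>z. m0 * pgf R z"])
      fix z :: real assume z: "0 < z" "z < 1"
      show "(\<lambda>k. m0 * pmf R k * z ^ k) sums (m0 * pgf R z)"
        using sums_mult[OF pgf_sums[of z R], of m0] z by (simp add: mult_ac)
      define D where "D = (\<Sum>k. diffs (pmf g) k * z ^ k)"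
      have D1: "(pgf g has_real_derivative D) (at z)" unfolding D_def
        by (rule pgf_deriv) (use z in auto)
      have "(pgf g has_real_derivative cc * ft z * Gt z) (at z within {0..1})"
        by (rule has_field_derivative_transform_within[OF Gt_deriv zero_less_one])
           (use z pg in auto)
      hence D2: "(pgf g has_real_derivative cc * ft z * Gt z) (at z)"
        using at_within_Icc_at[of 0 z 1] z by simp
      have DD: "D = cc * ft z * Gt z" using DERIV_unique[OF D1 D2] .
      have "(\<lambda>k. diffs (pmf g) k * z ^ k * z) sums (D * z)"
        unfolding D_def by (rule sums_mult2[OF diffs_sums]) (use z in auto)
      moreover have "(\<lambda>k. diffs (pmf g) k * z ^ k * z) = (\<lambda>k. real (Suc k) * pmf g (Suc k) * z ^ (Suc k))"
        by (auto simp: diffs_def mult_ac)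
      ultimately have h: "(\<lambda>k. real (Suc k) * pmf g (Suc k) * z ^ (Suc k)) sums (D * z)" by simp
      have s1: "(\<lambda>k. real k * pmf g k * z ^ k) sums (D * z)"
        using sums_Suc_iff[of "\<lambda>k. real k * pmf g k * z ^ k" "D * z"] h by simp
      have Dz: "D * z = m0 * pgf R z"
      proof -
        have z0: "0 \<le> z" "z \<le> 1" using z by auto
        have "pgf R z = pgf g z * (pgf (return_pmf 1) z *
                 pgf (conv_pmf Q (bind_pmf \<Gamma> (\<lambda>n. conv_pow P n))) z)"
          unfolding R_def by (simp only: pgf_conv[OF z0, of g] pgf_conv[OF z0, of "return_pmf 1"])
        also have "\<dots> = Gt z * (z * (b2 / b1 * ft z))"
          using pg[of z] W_pgf[OF hP hQ hG, of z] z0 by simp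
        finally have "pgf R z = Gt z * (z * (b2 / b1 * ft z))" .
        thus ?thesis using DD by (simp add: mult_ac)
      qed
      show "(\<lambda>k. real k * pmf g k * z ^ k) sums (m0 * pgf R z)" using s1 Dz by simp
    qed
    thus ?thesis unfolding R_def .
  qed
  define R0 where "R0 = conv_pmf g (conv_pmf (return_pmf 1) W0)"
  have k0: "real k * pmf g k = m0 * pmf R0 k" for k
    unfolding R0_def W0_def by (rule key[OF hP0 hQ0 hG0])
  have s0: "(\<lambda>k. pmf g k * real k) sums m0"
    using sums_mult[OF pmf_sums_1[of R0], of m0] k0 by (simp add: mult.commute)
  have intg: "integrable (measure_pmf g) real"
    unfolding integrable_pmf_nat_iff using sums_summable[OF s0] by simp
  have Eg: "measure_pmf.expectation g real = m0"
    using expectation_pmf_nat_sums[OF intg] s0 sums_unique2 by blast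
  show ?thesis
  proof (intro exI[of _ g] conjI allI impI)
    show "\<forall>z\<in>{0..1}. pgf g z = G z" using pg G_eq_Gt by auto
    show "inf_divisible g" unfolding g_def by (rule cpois_inf_div[OF r])
    show "integrable (measure_pmf g) real" by (rule intg)
    fix P Q \<Gamma> k
    assume hP: "mX > 0 \<longrightarrow> (\<forall>z\<in>{0..1}. pgf P z = tail_gf pX z / mX)"
      and hQ: "\<forall>z\<in>{0..1}. pgf Q z = b2 / b1 * inverse (1 - mX) * tail_gf pY z"
      and hG: "\<forall>z\<in>{0..1}. pgf \<Gamma> z = (1 - mX) / (1 - mX * z)"
    show "size_biased g k = pmf (conv_pmf g (conv_pmf (return_pmf 1)
                        (conv_pmf Q (bind_pmf \<Gamma> (\<lambda>n. conv_pow P n))))) k"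
      unfolding size_biased_def Eg using key[OF hP hQ hG, of k] m0 by simp
  qed
qed

end
theorem proposition5p2:
  fixes pX pY :: "nat pmf" and b1 b2 m0 :: real
  assumes "integrable (measure_pmf pX) (\<lambda>k. real k ^ 2)"
    and "integrable (measure_pmf pY) (\<lambda>k. real k ^ 2)"
    and "b1 > 0" and "b2 > 0" and "m0 > 0"
    and "b1 * (measure_pmf.expectation pX real - 1) + b2 * measure_pmf.expectation pY real = 0"
    and "pmf pY 0 < 1"
  defines "G \<equiv> (\<lambda>z. exp (- m0 * (b2 / b1) *
                 integral {z..1} (\<lambda>s. (1 - pgf pY s) / (pgf pX s - s))))"
    and "m \<equiv> measure_pmf.expectation pX real"
  shows "C1_stationary_solution pX pY b1 b2 m0 G
    \<and> (\<forall>h. C1_stationary_solution pX pY b1 b2 m0 h \<longrightarrow> (\<forall>z\<in>{0..1}. h z = G z))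
    \<and> (m > 0 \<longrightarrow> (\<exists>P. \<forall>z\<in>{0..1}. pgf P z = tail_gf pX z / m))
    \<and> (\<exists>Q. \<forall>z\<in>{0..1}. pgf Q z = b2 / b1 * inverse (1 - m) * tail_gf pY z)
    \<and> (\<exists>g. (\<forall>z\<in>{0..1}. pgf g z = G z) \<and> inf_divisible g
         \<and> integrable (measure_pmf g) real
         \<and> (\<forall>P Q \<Gamma>.
              (m > 0 \<longrightarrow> (\<forall>z\<in>{0..1}. pgf P z = tail_gf pX z / m)) \<longrightarrow>
              (\<forall>z\<in>{0..1}. pgf Q z = b2 / b1 * inverse (1 - m) * tail_gf pY z) \<longrightarrow>
              (\<forall>z\<in>{0..1}. pgf \<Gamma> z = (1 - m) / (1 - m * z)) \<longrightarrow>
              (\<forall>k. size_biased g k =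
                 pmf (conv_pmf g (conv_pmf (return_pmf 1)
                        (conv_pmf Q (bind_pmf \<Gamma> (\<lambda>n. conv_pow P n))))) k)))"
proof -
  interpret S: setting pX pY b1 b2 m0 using assms(1-7) by unfold_locales
  show ?thesis unfolding G_def m_def
  proof (intro conjI allI impI ballI)
    show "C1_stationary_solution pX pY b1 b2 m0 S.G" by (rule S.G_C1)
  next
    fix h z assume "C1_stationary_solution pX pY b1 b2 m0 h" "z \<in> {0..1::real}"
    thus "h z = S.G z" by (rule S.C1_unique)
  next
    assume "S.mX > 0"
    thus "\<exists>P. \<forall>z\<in>{0..1}. pgf P z = S.phiX z / S.mX" by (rule S.P_exists)
  next
    show "\<exists>Q. \<forall>z\<in>{0..1}. pgf Q z = b2 / b1 * inverse (1 - S.mX) * S.phiY z" by (rule S.Q_exists)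
  next
    show "\<exists>g. (\<forall>z\<in>{0..1}. pgf g z = S.G z) \<and> inf_divisible g
         \<and> integrable (measure_pmf g) real
         \<and> (\<forall>P Q \<Gamma>.
              (S.mX > 0 \<longrightarrow> (\<forall>z\<in>{0..1}. pgf P z = tail_gf pX z / S.mX)) \<longrightarrow>
              (\<forall>z\<in>{0..1}. pgf Q z = b2 / b1 * inverse (1 - S.mX) * tail_gf pY z) \<longrightarrow>
              (\<forall>z\<in>{0..1}. pgf \<Gamma> z = (1 - S.mX) / (1 - S.mX * z)) \<longrightarrow>
              (\<forall>k. size_biased g k =
                 pmf (conv_pmf g (conv_pmf (return_pmf 1)
                        (conv_pmf Q (bind_pmf \<Gamma> (\<lambda>n. conv_pow P n))))) k))"
      by (rule S.main_g)
  qed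
qed

end
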